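(* Let $V$ ($|V|>1$) index a discrete memoryless multiple source with entropy function $H$, and let $R_{\mathrm{CO}}$, $\hat f_{R_{\mathrm{CO}}}$, the fundamental partition $\mathcal{P}^*$ (with $|\mathcal{P}^*|\ge 2$), the core $\mathscr{R}^*_{\mathrm{CO}}(V)$ and the subgame cores $\mathscr{R}^*_{\mathrm{CO}}(C)$, $C\in\mathcal{P}^*$, be as in the context. Let $w_V\in\mathbb{R}_{>0}^{|V|}$, $K=|\mathcal{P}^*|-1$ and $\mathbb{Q}_K=\{z/K:z\in\mathbb{Z}\}$. Let $r^E_V$ be either (a) the egalitarian solution, i.e. the minimizer of $\min\{\sum_{i\in V}r_i^2/w_i: r_V\in\mathscr{R}^*_{\mathrm{CO}}(V)\}$, or (b) the fractional egalitarian solution, i.e. the minimizer of $\min\{\sum_{i\in V}r_i^2/w_i: r_V\in\mathscr{R}^*_{\mathrm{CO}}(V)\cap\mathbb{Q}_K^{|V|}\}$. Then $$r^E_V=\bigoplus_{C\in\mathcal{P}^*} r^E_C,$$ where, for each $C\in\mathcal{P}^*$, $r^E_C$ is, in case (a), the minimizer of $\min\{\sum_{i\in C}r_i^2/w_i: r_C\in\mathscr{R}^*_{\mathrm{CO}}(C)\}$ and, in case (b), the minimizer of $\min\{\sum_{i\in C}r_i^2/w_i: r_C\in\mathscr{R}^*_{\mathrm{CO}}(C)\cap\mathbb{Q}_K^{|C|}\}$ (the egalitarian, respectively fractional egalitarian, solution of the subgame on $C$).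
   Context: Write $r(X)=\sum_{i\in X}r_i$ and $H(X\mid Y)=H(X\cup Y)-H(Y)$, where $H(X)$ is the entropy of $(Z_i:i\in X)$. The achievable region is $\mathscr{R}(V)=\{r_V\in\mathbb{R}^{|V|}: r(X)\ge H(X\mid V\setminus X)\ \forall X\subsetneq V\}$ and $R_{\mathrm{CO}}=\min\{r(V):r_V\in\mathscr{R}(V)\}$. For $\alpha\in\mathbb{R}$, $f_\alpha(\emptyset)=0$, $f_\alpha(X)=\alpha-H(V\setminus X\mid X)$ for $X\ne\emptyset$, and the Dilworth truncation is $\hat f_\alpha(X)=\min_{\mathcal{P}\in\Pi(X)}\sum_{C\in\mathcal{P}}f_\alpha(C)$ with $\Pi(X)$ the set of partitions of $X$. The fundamental partition $\mathcal{P}^*$ is the finest partition of $V$ attaining $\hat f_{R_{\mathrm{CO}}}(V)$. The core is $\mathscr{R}^*_{\mathrm{CO}}(V)=\{r_V\in\mathscr{R}(V): r(V)=R_{\mathrm{CO}}\}$, and for $C\subseteq V$, $\mathscr{R}^*_{\mathrm{CO}}(C)=\{r_C\in\mathbb{R}^{|C|}: r(X)\le\hat f_{R_{\mathrm{CO}}}(X)\ \forall X\subseteq C,\ r(C)=\hat f_{R_{\mathrm{CO}}}(C)\}$. The direct sum $\bigoplus_{C}r_C$ over a partition is the vector on $V$ whose $C$-coordinates are those of $r_C$. *)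

theory Defs
  imports Complex_Main "HOL-Library.FuncSet"
begin

text \<open>A source on the index set V: a joint probability mass function p on the
  (finitely many) outcome vectors x in PiE V (\<lambda>_. UNIV), over a finite alphabet 'a.\<close>

definition is_joint_pmf :: "'i set \<Rightarrow> (('i \<Rightarrow> 'a::finite) \<Rightarrow> real) \<Rightarrow> bool" where
  "is_joint_pmf V p \<longleftrightarrow> (\<forall>x\<in>PiE V (\<lambda>_. UNIV). p x \<ge> 0) \<and> (\<Sum>x\<in>PiE V (\<lambda>_. UNIV). p x) = 1"

definition marginal :: "'i set \<Rightarrow> (('i \<Rightarrow> 'a::finite) \<Rightarrow> real) \<Rightarrow> 'i set \<Rightarrow> ('i \<Rightarrow> 'a) \<Rightarrow> real" where
  "marginal V p X z = (\<Sum>x\<in>{x\<in>PiE V (\<lambda>_. UNIV). restrict x X = z}. p x)"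

definition entropy_fun :: "'i set \<Rightarrow> (('i \<Rightarrow> 'a::finite) \<Rightarrow> real) \<Rightarrow> 'i set \<Rightarrow> real" where
  "entropy_fun V p X = - (\<Sum>z\<in>PiE X (\<lambda>_. UNIV).
      (let q = marginal V p X z in if q = 0 then 0 else q * log 2 q))"

definition condH :: "('i set \<Rightarrow> real) \<Rightarrow> 'i set \<Rightarrow> 'i set \<Rightarrow> real" where
  "condH H X Y = H (X \<union> Y) - H Y"

text \<open>Vectors r_V in R^|V| are functions extensional on V.\<close>
definition CO_region :: "('i set \<Rightarrow> real) \<Rightarrow> 'i set \<Rightarrow> ('i \<Rightarrow> real) set" where
  "CO_region H V = {r. r \<in> extensional V \<and> (\<forall>X. X \<subset> V \<longrightarrow> sum r X \<ge> condH H X (V - X))}"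

definition R_CO :: "('i set \<Rightarrow> real) \<Rightarrow> 'i set \<Rightarrow> real" where
  "R_CO H V = (INF r\<in>CO_region H V. sum r V)"

definition f_alpha :: "('i set \<Rightarrow> real) \<Rightarrow> 'i set \<Rightarrow> real \<Rightarrow> 'i set \<Rightarrow> real" where
  "f_alpha H V \<alpha> X = (if X = {} then 0 else \<alpha> - condH H (V - X) X)"

definition is_partition :: "'i set set \<Rightarrow> 'i set \<Rightarrow> bool" where
  "is_partition P X \<longleftrightarrow> \<Union>P = X \<and> (\<forall>C\<in>P. C \<noteq> {}) \<and>
      (\<forall>C\<in>P. \<forall>D\<in>P. C \<noteq> D \<longrightarrow> C \<inter> D = {})"

definition dilworth :: "('i set \<Rightarrow> real) \<Rightarrow> 'i set \<Rightarrow> real \<Rightarrow> 'i set \<Rightarrow> real" where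
  "dilworth H V \<alpha> X = Min ((\<lambda>P. \<Sum>C\<in>P. f_alpha H V \<alpha> C) ` {P. is_partition P X})"

definition fundamental_partition :: "('i set \<Rightarrow> real) \<Rightarrow> 'i set \<Rightarrow> 'i set set \<Rightarrow> bool" where
  "fundamental_partition H V P \<longleftrightarrow>
     is_partition P V \<and> (\<Sum>C\<in>P. f_alpha H V (R_CO H V) C) = dilworth H V (R_CO H V) V \<and>
     (\<forall>Q. is_partition Q V \<and> (\<Sum>C\<in>Q. f_alpha H V (R_CO H V) C) = dilworth H V (R_CO H V) V
          \<longrightarrow> (\<forall>C\<in>P. \<exists>D\<in>Q. C \<subseteq> D))"

definition CO_core :: "('i set \<Rightarrow> real) \<Rightarrow> 'i set \<Rightarrow> ('i \<Rightarrow> real) set" where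
  "CO_core H V = {r \<in> CO_region H V. sum r V = R_CO H V}"

definition CO_subcore :: "('i set \<Rightarrow> real) \<Rightarrow> 'i set \<Rightarrow> 'i set \<Rightarrow> ('i \<Rightarrow> real) set" where
  "CO_subcore H V C = {r. r \<in> extensional C \<and>
      (\<forall>X. X \<subseteq> C \<longrightarrow> sum r X \<le> dilworth H V (R_CO H V) X) \<and>
      sum r C = dilworth H V (R_CO H V) C}"

definition weighted_sq :: "('i \<Rightarrow> real) \<Rightarrow> 'i set \<Rightarrow> ('i \<Rightarrow> real) \<Rightarrow> real" where
  "weighted_sq w S r = (\<Sum>i\<in>S. (r i)^2 / w i)"

definition is_minimizer :: "(('i \<Rightarrow> real) \<Rightarrow> real) \<Rightarrow> ('i \<Rightarrow> real) set \<Rightarrow> ('i \<Rightarrow> real) \<Rightarrow> bool" where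
  "is_minimizer obj S r \<longleftrightarrow> r \<in> S \<and> (\<forall>s\<in>S. obj r \<le> obj s)"

definition QK_vectors :: "nat \<Rightarrow> 'i set \<Rightarrow> ('i \<Rightarrow> real) set" where
  "QK_vectors K S = {r. \<forall>i\<in>S. \<exists>z::int. r i = real_of_int z / real K}"

definition direct_sum :: "'i set set \<Rightarrow> ('i set \<Rightarrow> 'i \<Rightarrow> real) \<Rightarrow> 'i \<Rightarrow> real" where
  "direct_sum P rC = (\<lambda>i. if \<exists>C\<in>P. i \<in> C then rC (THE C. C \<in> P \<and> i \<in> C) i else undefined)"

end

theory Submission
  imports Defs
begin


lemma restr_sub: "restrict y A = restrict x A \<Longrightarrow> I \<subseteq> A \<Longrightarrow> restrict y I = restrict x I"
  by (auto simp: fun_eq_iff restrict_def) (metis subsetD)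

lemma restr_un: assumes "restrict x A = restrict z A" "restrict x B = restrict z B"
  shows "restrict x (A \<union> B) = restrict z (A \<union> B)"
proof
  fix i show "restrict x (A \<union> B) i = restrict z (A \<union> B) i"
    using fun_cong[OF assms(1), of i] fun_cong[OF assms(2), of i] by (auto simp: restrict_def)
qed

locale src =
  fixes V :: "'i set" and p :: "('i \<Rightarrow> 'a::finite) \<Rightarrow> real"
  assumes finV: "finite V" and pmf: "is_joint_pmf V p"
begin

abbreviation "Om \<equiv> PiE V (\<lambda>_. UNIV :: 'a set)"
definition "M S x = marginal V p S (restrict x S)"

lemma finOm: "finite Om" using finV by (auto intro: finite_PiE)
lemma pnn: "x \<in> Om \<Longrightarrow> p x \<ge> 0" using pmf by (auto simp: is_joint_pmf_def)
lemma psum: "sum p Om = 1" using pmf by (auto simp: is_joint_pmf_def)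

lemma M_alt: "M S x = (\<Sum>y\<in>{y\<in>Om. restrict y S = restrict x S}. p y)"
  by (simp add: M_def marginal_def)

lemma M_ge: "x \<in> Om \<Longrightarrow> p x \<le> M S x"
  unfolding M_alt by (rule member_le_sum) (auto simp: finOm pnn)

lemma M_le1: "M S x \<le> 1"
proof -
  have "M S x \<le> sum p Om" unfolding M_alt by (rule sum_mono2) (auto simp: finOm pnn)
  then show ?thesis using psum by simp
qed

lemma M_nn: "M S x \<ge> 0"
  unfolding M_alt by (rule sum_nonneg) (auto simp: pnn)

lemma ent: assumes SV: "S \<subseteq> V" shows "entropy_fun V p S = - (\<Sum>x\<in>Om. p x * log 2 (M S x))"
proof -
  have "(\<Sum>z\<in>PiE S (\<lambda>_. UNIV). (let q = marginal V p S z in if q = 0 then 0 else q * log 2 q))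
      = (\<Sum>z\<in>PiE S (\<lambda>_. UNIV). marginal V p S z * log 2 (marginal V p S z))"
    by (rule sum.cong) (auto simp: Let_def)
  also have "\<dots> = (\<Sum>z\<in>PiE S (\<lambda>_. UNIV). \<Sum>x\<in>{x\<in>Om. restrict x S = z}. p x * log 2 (M S x))"
    by (rule sum.cong) (auto simp: marginal_def sum_distrib_right M_def intro!: sum.cong)
  also have "\<dots> = (\<Sum>x\<in>Om. p x * log 2 (M S x))"
    by (rule sum.group) (use SV finV finite_subset in \<open>auto simp: finOm intro!: finite_PiE\<close>)
  finally show ?thesis unfolding entropy_fun_def by simp
qed

lemma ent_nonneg: assumes SV: "S \<subseteq> V" shows "entropy_fun V p S \<ge> 0"
proof -
  have "(\<Sum>x\<in>Om. p x * log 2 (M S x)) \<le> 0"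
  proof (rule sum_nonpos)
    fix x assume x: "x \<in> Om"
    show "p x * log 2 (M S x) \<le> 0"
    proof (cases "p x = 0")
      case False
      then have "p x > 0" using pnn[OF x] by simp
      moreover have "M S x > 0" using M_ge[OF x, of S] calculation by simp
      ultimately show ?thesis using M_le1[of S x]
        by (simp add: mult_nonneg_nonpos)
    qed simp
  qed
  then show ?thesis by (simp add: ent[OF SV])
qed

lemma M_pos: "x \<in> Om \<Longrightarrow> p x > 0 \<Longrightarrow> M S x > 0"
  using M_ge[of x S] by simp

lemma M_cong: "restrict x S = restrict y S \<Longrightarrow> M S x = M S y"
  by (simp add: M_def)

lemma M_filter: "M S x = (\<Sum>y\<in>Om. if restrict y S = restrict x S then p y else 0)"
  unfolding M_alt by (simp add: sum.inter_filter[OF finOm])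

lemma inner_bound:
  assumes y: "y \<in> Om" and y': "y' \<in> Om"
  shows "(\<Sum>x\<in>{x\<in>Om. p x > 0}. (if restrict y A = restrict x A \<and> restrict y' B = restrict x B
            then p x * p y * p y' / (M (A \<union> B) x * M (A \<inter> B) x) else 0))
       \<le> (if restrict y (A \<inter> B) = restrict y' (A \<inter> B) then p y * p y' / M (A \<inter> B) y else 0)"
    (is "?L \<le> ?R")
proof -
  define F where "F = {x\<in>Om. p x > 0 \<and> restrict y A = restrict x A \<and> restrict y' B = restrict x B}"
  have finF: "finite F" unfolding F_def using finOm by simp
  have L: "?L = (\<Sum>x\<in>F. p x * p y * p y' / (M (A \<union> B) x * M (A \<inter> B) x))"
    unfolding F_def using finOm by (simp add: sum.inter_filter[symmetric] conj_assoc)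
  have Rnn: "?R \<ge> 0" using pnn[OF y] pnn[OF y'] M_nn by auto
  show ?thesis
  proof (cases "F = {}")
    case True then show ?thesis using L Rnn by simp
  next
    case False
    then obtain x0 where x0: "x0 \<in> F" by auto
    then have x0Om: "x0 \<in> Om" and px0: "p x0 > 0" and e1: "restrict y A = restrict x0 A"
      and e2: "restrict y' B = restrict x0 B" by (auto simp: F_def)
    have eI: "restrict y (A \<inter> B) = restrict y' (A \<inter> B)"
      using restr_sub[OF e1, of "A \<inter> B"] restr_sub[OF e2, of "A \<inter> B"] by auto
    have MU: "M (A \<union> B) x = M (A \<union> B) x0" if "x \<in> F" for x
    proof (rule M_cong, rule restr_un)
      show "restrict x A = restrict x0 A" using that e1 by (auto simp: F_def)
      show "restrict x B = restrict x0 B" using that e2 by (auto simp: F_def)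
    qed
    have MI: "M (A \<inter> B) x = M (A \<inter> B) y" if "x \<in> F" for x
      by (rule M_cong, rule restr_sub[of _ A]) (use that in \<open>auto simp: F_def\<close>)
    define c where "c = p y * p y' / (M (A \<union> B) x0 * M (A \<inter> B) y)"
    have "?L = (\<Sum>x\<in>F. p x * c)" unfolding L c_def
      by (rule sum.cong) (auto simp: MU MI)
    also have "\<dots> = (\<Sum>x\<in>F. p x) * c" by (simp add: sum_distrib_right)
    also have "\<dots> \<le> M (A \<union> B) x0 * c"
    proof (rule mult_right_mono)
      show "c \<ge> 0" unfolding c_def using pnn[OF y] pnn[OF y'] M_nn by auto
      show "sum p F \<le> M (A \<union> B) x0" unfolding M_alt
        apply (rule sum_mono2)
        using finOm apply simp
        subgoal using x0 e1 e2 by (auto simp: F_def intro: restr_un)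
        subgoal using pnn by auto
        done
    qed
    also have "\<dots> = p y * p y' / M (A \<inter> B) y"
      unfolding c_def using M_pos[OF x0Om px0, of "A \<union> B"] by simp
    finally show ?thesis using eI by simp
  qed
qed

lemma T_le1:
  "(\<Sum>x\<in>{x\<in>Om. p x > 0}. p x * (M A x * M B x / (M (A \<union> B) x * M (A \<inter> B) x))) \<le> 1"
proof -
  let ?P = "{x\<in>Om. p x > 0}"
  let ?G = "\<lambda>x y y'. (if restrict y A = restrict x A \<and> restrict y' B = restrict x B
            then p x * p y * p y' / (M (A \<union> B) x * M (A \<inter> B) x) else 0)"
  have "p x * (M A x * M B x / (M (A \<union> B) x * M (A \<inter> B) x)) = (\<Sum>y\<in>Om. \<Sum>y'\<in>Om. ?G x y y')" for x
  proof -
    have "M A x * M B x = (\<Sum>y\<in>Om. \<Sum>y'\<in>Om. (if restrict y A = restrict x A then p y else 0) *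
           (if restrict y' B = restrict x B then p y' else 0))"
      unfolding M_filter[of A] M_filter[of B] by (rule sum_product)
    then have "p x * (M A x * M B x / (M (A \<union> B) x * M (A \<inter> B) x)) =
        (p x / (M (A \<union> B) x * M (A \<inter> B) x)) * (\<Sum>y\<in>Om. \<Sum>y'\<in>Om. (if restrict y A = restrict x A then p y else 0) *
           (if restrict y' B = restrict x B then p y' else 0))" by simp
    also have "\<dots> = (\<Sum>y\<in>Om. \<Sum>y'\<in>Om. ?G x y y')"
      by (simp add: sum_distrib_left) (intro sum.cong refl, auto)
    finally show ?thesis .
  qed
  then have "(\<Sum>x\<in>?P. p x * (M A x * M B x / (M (A \<union> B) x * M (A \<inter> B) x)))
       = (\<Sum>x\<in>?P. \<Sum>y\<in>Om. \<Sum>y'\<in>Om. ?G x y y')" by simp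
  also have "\<dots> = (\<Sum>y\<in>Om. \<Sum>x\<in>?P. \<Sum>y'\<in>Om. ?G x y y')" by (rule sum.swap)
  also have "\<dots> = (\<Sum>y\<in>Om. \<Sum>y'\<in>Om. \<Sum>x\<in>?P. ?G x y y')" by (rule sum.cong[OF refl], rule sum.swap)
  also have "\<dots> \<le> (\<Sum>y\<in>Om. \<Sum>y'\<in>Om. (if restrict y (A \<inter> B) = restrict y' (A \<inter> B) then p y * p y' / M (A \<inter> B) y else 0))"
    by (intro sum_mono inner_bound)
  also have "\<dots> = (\<Sum>y\<in>Om. p y / M (A \<inter> B) y * (\<Sum>y'\<in>Om. if restrict y' (A \<inter> B) = restrict y (A \<inter> B) then p y' else 0))"
    by (simp add: sum_distrib_left eq_commute if_distrib cong: if_cong)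
  also have "\<dots> = (\<Sum>y\<in>Om. p y / M (A \<inter> B) y * M (A \<inter> B) y)"
    by (simp add: M_filter[symmetric])
  also have "\<dots> = (\<Sum>y\<in>Om. p y)"
  proof (rule sum.cong[OF refl])
    fix y assume y: "y \<in> Om"
    show "p y / M (A \<inter> B) y * M (A \<inter> B) y = p y"
    proof (cases "p y = 0")
      case False
      then have "p y > 0" using pnn[OF y] by simp
      then show ?thesis using M_pos[OF y, of "A \<inter> B"] by simp
    qed simp
  qed
  finally show ?thesis using psum by simp
qed

lemma submod:
  assumes AV: "A \<subseteq> V" and BV: "B \<subseteq> V"
  shows "entropy_fun V p (A \<union> B) + entropy_fun V p (A \<inter> B) \<le> entropy_fun V p A + entropy_fun V p B"
proof -
  let ?P = "{x\<in>Om. p x > 0}"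
  let ?r = "\<lambda>x. M A x * M B x / (M (A \<union> B) x * M (A \<inter> B) x)"
  have "entropy_fun V p (A \<union> B) + entropy_fun V p (A \<inter> B) - entropy_fun V p A - entropy_fun V p B
      = (\<Sum>x\<in>Om. p x * (log 2 (M A x) + log 2 (M B x) - log 2 (M (A \<union> B) x) - log 2 (M (A \<inter> B) x)))"
    using AV BV by (simp add: ent Int_absorb2 le_infI1 sum_subtractf sum.distrib distrib_left right_diff_distrib)
  also have "\<dots> \<le> (\<Sum>x\<in>Om. if p x > 0 then (p x * ?r x - p x) / ln 2 else 0)"
  proof (rule sum_mono)
    fix x assume x: "x \<in> Om"
    show "p x * (log 2 (M A x) + log 2 (M B x) - log 2 (M (A \<union> B) x) - log 2 (M (A \<inter> B) x))
        \<le> (if p x > 0 then (p x * ?r x - p x) / ln 2 else 0)"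
    proof (cases "p x > 0")
      case True
      have pos: "M S x > 0" for S using M_pos[OF x True] .
      have "log 2 (M A x) + log 2 (M B x) - log 2 (M (A \<union> B) x) - log 2 (M (A \<inter> B) x) = ln (?r x) / ln 2"
        using pos[of A] pos[of B] pos[of "A \<union> B"] pos[of "A \<inter> B"]
        by (simp add: log_def ln_mult ln_div diff_divide_distrib add_divide_distrib)
      also have "\<dots> \<le> (?r x - 1) / ln 2"
        by (rule divide_right_mono, rule ln_le_minus_one) (use pos in auto)
      finally have "p x * (log 2 (M A x) + log 2 (M B x) - log 2 (M (A \<union> B) x) - log 2 (M (A \<inter> B) x))
          \<le> p x * ((?r x - 1) / ln 2)" using True by (intro mult_left_mono) auto
      then show ?thesis using True by (simp add: right_diff_distrib)
    next
      case False
      then have "p x = 0" using pnn[OF x] by simp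
      then show ?thesis by simp
    qed
  qed
  also have "\<dots> = (\<Sum>x\<in>?P. (p x * ?r x - p x) / ln 2)"
    by (rule sum.inter_filter[OF finOm, symmetric])
  also have "\<dots> = ((\<Sum>x\<in>?P. p x * ?r x) - (\<Sum>x\<in>?P. p x)) / ln 2"
    by (simp only: sum_subtractf[symmetric] sum_divide_distrib)
  also have "(\<Sum>x\<in>?P. p x) = 1"
  proof -
    have "(\<Sum>x\<in>?P. p x) = sum p Om"
      by (rule sum.mono_neutral_left) (use finOm pnn in \<open>auto simp: less_le\<close>)
    then show ?thesis using psum by simp
  qed
  also have "((\<Sum>x\<in>?P. p x * ?r x) - 1) / ln 2 \<le> 0"
    using T_le1 by (simp add: divide_nonpos_pos)
  finally show ?thesis by simp
qed

end



lemma part_sub: "is_partition Q X \<Longrightarrow> C \<in> Q \<Longrightarrow> C \<subseteq> X"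
  by (auto simp: is_partition_def)

lemma part_fin: "finite X \<Longrightarrow> is_partition Q X \<Longrightarrow> finite Q"
  by (rule finite_subset[of Q "Pow X"]) (auto simp: is_partition_def)

lemma part_sum: assumes "finite X" "is_partition Q X" shows "(\<Sum>C\<in>Q. sum r C) = sum r X"
proof -
  have "sum r (\<Union>Q) = (\<Sum>C\<in>Q. sum r C)"
    using assms by (subst sum.Union_disjoint) (auto simp: is_partition_def intro: finite_subset)
  then show ?thesis using assms by (simp add: is_partition_def)
qed

lemma parts_fin: "finite X \<Longrightarrow> finite {Q. is_partition Q X}"
  by (rule finite_subset[of _ "Pow (Pow X)"]) (auto simp: is_partition_def)

lemma parts_ne: "\<exists>Q. is_partition Q X"
proof (cases "X = {}")
  case True then show ?thesis by (auto simp: is_partition_def intro!: exI[of _ "{}"])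
next
  case False then show ?thesis by (auto simp: is_partition_def intro!: exI[of _ "{X}"])
qed

lemma D_le: "finite X \<Longrightarrow> is_partition Q X \<Longrightarrow> dilworth H V a X \<le> (\<Sum>C\<in>Q. f_alpha H V a C)"
  unfolding dilworth_def by (rule Min_le) (auto simp: parts_fin)

lemma D_att: "finite X \<Longrightarrow> \<exists>Q. is_partition Q X \<and> dilworth H V a X = (\<Sum>C\<in>Q. f_alpha H V a C)"
proof -
  assume "finite X"
  then have "dilworth H V a X \<in> (\<lambda>P. \<Sum>C\<in>P. f_alpha H V a C) ` {P. is_partition P X}"
    unfolding dilworth_def using parts_ne[of X] by (intro Min_in) (auto simp: parts_fin)
  then show ?thesis by auto
qed

lemma f_eq: "C \<noteq> {} \<Longrightarrow> C \<subseteq> V \<Longrightarrow> f_alpha H V a C = a - H V + H C"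
  by (simp add: f_alpha_def condH_def Un_absorb2 Diff_partition)

lemma direct_sum_in: "is_partition P V \<Longrightarrow> C \<in> P \<Longrightarrow> i \<in> C \<Longrightarrow> direct_sum P rC i = rC C i"
proof -
  assume P: "is_partition P V" and C: "C \<in> P" "i \<in> C"
  have "(THE C. C \<in> P \<and> i \<in> C) = C"
    by (rule the_equality) (use P C in \<open>auto simp: is_partition_def\<close>)
  then show ?thesis using C by (auto simp: direct_sum_def)
qed

lemma direct_sum_out: "is_partition P V \<Longrightarrow> i \<notin> V \<Longrightarrow> direct_sum P rC i = undefined"
  by (auto simp: direct_sum_def is_partition_def)

lemma direct_sum_sum: assumes P: "is_partition P V" and fin: "finite V" and Y: "Y \<subseteq> V"
  shows "sum (direct_sum P rC) Y = (\<Sum>C\<in>P. sum (rC C) (Y \<inter> C))"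
proof -
  have fP: "finite P" using part_fin[OF fin P] .
  have "Y = (\<Union>C\<in>P. Y \<inter> C)" using P Y by (auto simp: is_partition_def)
  moreover have "sum (direct_sum P rC) (\<Union>C\<in>P. Y \<inter> C) = (\<Sum>C\<in>P. sum (direct_sum P rC) (Y \<inter> C))"
  proof (rule sum.UNION_disjoint)
    show "finite P" by fact
    show "\<forall>C\<in>P. finite (Y \<inter> C)" using fin Y by (auto intro: finite_subset)
    show "\<forall>i\<in>P. \<forall>j\<in>P. i \<noteq> j \<longrightarrow> Y \<inter> i \<inter> (Y \<inter> j) = {}" using P by (auto simp: is_partition_def)
  qed
  ultimately have "sum (direct_sum P rC) Y = (\<Sum>C\<in>P. sum (direct_sum P rC) (Y \<inter> C))" by simp
  also have "\<dots> = (\<Sum>C\<in>P. sum (rC C) (Y \<inter> C))"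
    by (intro sum.cong refl) (use direct_sum_in[OF P] in auto)
  finally show ?thesis .
qed

locale cfg =
  fixes H :: "'i set \<Rightarrow> real" and V :: "'i set" and P :: "'i set set"
  assumes finV: "finite V" and cardV: "card V > 1"
    and Hsub: "\<And>A B. A \<subseteq> V \<Longrightarrow> B \<subseteq> V \<Longrightarrow> H (A \<union> B) + H (A \<inter> B) \<le> H A + H B"
    and Hnn: "\<And>A. A \<subseteq> V \<Longrightarrow> H A \<ge> 0"
    and fund: "fundamental_partition H V P"
begin

abbreviation "\<alpha> \<equiv> R_CO H V"
abbreviation "f \<equiv> f_alpha H V \<alpha>"
abbreviation "D \<equiv> dilworth H V \<alpha>"

lemma Ppart: "is_partition P V" using fund by (simp add: fundamental_partition_def)
lemma Psum: "(\<Sum>C\<in>P. f C) = D V" using fund by (simp add: fundamental_partition_def)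
lemma finP: "finite P" using part_fin[OF finV Ppart] .
lemma Vne: "V \<noteq> {}" using cardV by auto

lemma region_ne: "CO_region H V \<noteq> {}"
proof -
  define r0 where "r0 = restrict (\<lambda>_. H V) V"
  have "r0 \<in> CO_region H V"
    unfolding CO_region_def
  proof (intro CollectI conjI allI impI)
    show "r0 \<in> extensional V" by (simp add: r0_def)
    fix X assume X: "X \<subset> V"
    have "sum r0 X = (\<Sum>x\<in>X. H V)" by (rule sum.cong) (use X in \<open>auto simp: r0_def\<close>)
    then have s: "sum r0 X = card X * H V" by simp
    have c: "condH H X (V - X) = H V - H (V - X)" using X by (simp add: condH_def Un_absorb1 Un_Diff_cancel)
    show "condH H X (V - X) \<le> sum r0 X"
    proof (cases "X = {}")
      case True then show ?thesis by (simp add: condH_def)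
    next
      case False
      then have "card X \<ge> 1" using X finV by (simp add: Suc_le_eq card_gt_0_iff) (meson finite_subset psubset_imp_subset)
      then have "H V \<le> card X * H V" using Hnn[of V] by (simp add: mult_le_cancel_right1)
      then show ?thesis using s c Hnn[of "V - X"] by simp
    qed
  qed
  then show ?thesis by auto
qed

lemma DV: "D V = \<alpha>"
proof (rule antisym)
  have "is_partition {V} V" using Vne by (simp add: is_partition_def)
  from D_le[OF finV this, of H V \<alpha>] show "D V \<le> \<alpha>" by (simp add: f_alpha_def condH_def Vne)
next
  obtain Q where Q: "is_partition Q V" and DQ: "D V = (\<Sum>C\<in>Q. f C)" using D_att[OF finV] by blast
  have fQ: "finite Q" using part_fin[OF finV Q] .
  define k where "k = card Q"
  define c where "c = (\<Sum>C\<in>Q. H C) - k * H V"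
  have sumQ: "(\<Sum>C\<in>Q. f C) = k * \<alpha> + c"
  proof -
    have "(\<Sum>C\<in>Q. f C) = (\<Sum>C\<in>Q. \<alpha> - H V + H C)"
      by (intro sum.cong refl f_eq) (use Q in \<open>auto simp: is_partition_def\<close>)
    also have "\<dots> = (\<Sum>C\<in>Q. H C) + k * (\<alpha> - H V)"
      by (simp add: sum.distrib k_def sum_subtractf)
    finally show ?thesis by (simp add: c_def algebra_simps)
  qed
  have key: "(real k - 1) * sum r V + c \<ge> 0" if r: "r \<in> CO_region H V" for r :: "'i \<Rightarrow> real"
  proof -
    have "sum r C \<le> sum r V - H V + H C" if C: "C \<in> Q" for C
    proof (cases "C = V")
      case False
      have CV: "C \<subseteq> V" using part_sub[OF Q C] .
      have "C \<noteq> {}" using Q C by (auto simp: is_partition_def)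
      then have "V - C \<subset> V" using CV by blast
      then have "sum r (V - C) \<ge> condH H (V - C) (V - (V - C))" using r by (auto simp: CO_region_def)
      moreover have "condH H (V - C) (V - (V - C)) = H V - H C"
        using CV by (simp add: condH_def Diff_Diff_Int Int_absorb1 Un_absorb2 Diff_partition)
      moreover have "sum r V = sum r C + sum r (V - C)"
        using sum.subset_diff[OF CV finV, of r] by simp
      ultimately show ?thesis by simp
    qed simp
    then have "sum r V \<le> (\<Sum>C\<in>Q. sum r V - H V + H C)"
      using part_sum[OF finV Q, of r] by (metis sum_mono)
    also have "\<dots> = (\<Sum>C\<in>Q. H C) + k * (sum r V - H V)"
      by (simp add: sum.distrib k_def sum_subtractf)
    finally show ?thesis by (simp add: c_def algebra_simps)
  qed
  have k1: "k \<ge> 1" using Q Vne fQ by (auto simp: k_def is_partition_def Suc_le_eq card_gt_0_iff)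
  have "(real k - 1) * \<alpha> + c \<ge> 0"
  proof (cases "k = 1")
    case True
    obtain r where "r \<in> CO_region H V" using region_ne by auto
    from key[OF this] True show ?thesis by simp
  next
    case False
    then have kp: "real k - 1 > 0" using k1 by simp
    have "- c / (real k - 1) \<le> \<alpha>"
      unfolding R_CO_def
    proof (rule cINF_greatest[OF region_ne])
      fix r assume "r \<in> CO_region H V"
      from key[OF this] show "- c / (real k - 1) \<le> sum r V" using kp by (simp add: field_simps)
    qed
    then show ?thesis using kp k1 by (simp add: field_simps of_nat_diff)
  qed
  then show "\<alpha> \<le> D V" using DQ sumQ k1 by (simp add: of_nat_diff algebra_simps)
qed

end


context cfg begin

lemma Pdisj: "X \<in> P \<Longrightarrow> Z \<in> P \<Longrightarrow> X \<noteq> Z \<Longrightarrow> X \<inter> Z = {}"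
  using Ppart unfolding is_partition_def by blast

lemma PsumA: "(\<Sum>C\<in>P. f C) = \<alpha>" using Psum DV by simp

lemma DC: assumes C: "C \<in> P" shows "D C = f C"
proof (rule antisym)
  have CV: "C \<subseteq> V" using part_sub[OF Ppart C] .
  have Cne: "C \<noteq> {}" using Ppart C by (auto simp: is_partition_def)
  have fC: "finite C" using CV finV by (rule finite_subset)
  have "is_partition {C} C" using Cne by (simp add: is_partition_def)
  from D_le[OF fC this, of H V \<alpha>] show "D C \<le> f C" by simp
  obtain Q where Q: "is_partition Q C" and DQ: "D C = (\<Sum>B\<in>Q. f B)" using D_att[OF fC] by blast
  have fQ: "finite Q" using part_fin[OF fC Q] .
  have disj: "(P - {C}) \<inter> Q = {}"
  proof (rule ccontr)
    assume "(P - {C}) \<inter> Q \<noteq> {}"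
    then obtain B where B: "B \<in> P" "B \<noteq> C" "B \<in> Q" by auto
    have "B \<subseteq> C" "B \<noteq> {}" using Q B by (auto simp: is_partition_def)
    moreover have "B \<inter> C = {}" using Ppart B C by (auto simp: is_partition_def)
    ultimately show False by blast
  qed
  have P': "is_partition ((P - {C}) \<union> Q) V"
    unfolding is_partition_def
  proof (intro conjI ballI impI)
    show "\<Union>(P - {C} \<union> Q) = V" using Ppart Q C by (auto simp: is_partition_def)
    fix A assume "A \<in> P - {C} \<union> Q" then show "A \<noteq> {}" using Ppart Q by (auto simp: is_partition_def)
  next
    fix A B assume A: "A \<in> P - {C} \<union> Q" and B: "B \<in> P - {C} \<union> Q" and AB: "A \<noteq> B"
    have sub: "X \<subseteq> C" if "X \<in> Q" for X using Q that by (auto simp: is_partition_def)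
    have dPC: "X \<inter> C = {}" if "X \<in> P - {C}" for X using Ppart C that by (auto simp: is_partition_def)
    have pd: "X \<inter> Z = {}" if "X \<in> P" "Z \<in> P" "X \<noteq> Z" for X Z
      using Ppart that unfolding is_partition_def by blast
    have qd: "X \<inter> Z = {}" if "X \<in> Q" "Z \<in> Q" "X \<noteq> Z" for X Z
      using Q that unfolding is_partition_def by blast
    show "A \<inter> B = {}"
    proof (cases "A \<in> Q")
      case AQ: True
      show ?thesis
      proof (cases "B \<in> Q")
        case True show ?thesis by (rule qd[OF AQ True AB])
      next
        case False
        then have "B \<in> P - {C}" using B by blast
        then have "B \<inter> C = {}" by (rule dPC)
        moreover have "A \<subseteq> C" using sub[OF AQ] .
        ultimately show ?thesis by blast
      qed
    next
      case AQ: False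
      then have AP: "A \<in> P - {C}" using A by blast
      show ?thesis
      proof (cases "B \<in> Q")
        case True
        have "A \<inter> C = {}" using dPC[OF AP] .
        moreover have "B \<subseteq> C" using sub[OF True] .
        ultimately show ?thesis by blast
      next
        case False
        then have "B \<in> P - {C}" using B by blast
        then show ?thesis using pd AP AB by blast
      qed
    qed
  qed
  have "D V \<le> (\<Sum>B\<in>(P - {C}) \<union> Q. f B)" by (rule D_le[OF finV P'])
  also have "\<dots> = (\<Sum>B\<in>P - {C}. f B) + (\<Sum>B\<in>Q. f B)"
    by (rule sum.union_disjoint) (use finP fQ disj in auto)
  finally have "D V \<le> (\<Sum>B\<in>P - {C}. f B) + D C" using DQ by simp
  moreover have "D V = (\<Sum>B\<in>P - {C}. f B) + f C"
    using Psum sum.remove[OF finP C, of f] by simp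
  ultimately show "f C \<le> D C" by simp
qed

lemma core_char: "r \<in> CO_core H V \<longleftrightarrow>
   r \<in> extensional V \<and> sum r V = \<alpha> \<and> (\<forall>Y. Y \<subseteq> V \<longrightarrow> Y \<noteq> {} \<longrightarrow> sum r Y \<le> f Y)"
proof
  assume r: "r \<in> CO_core H V"
  then have ext: "r \<in> extensional V" and rV: "sum r V = \<alpha>"
    and reg: "\<And>X. X \<subset> V \<Longrightarrow> sum r X \<ge> condH H X (V - X)"
    by (auto simp: CO_core_def CO_region_def)
  have "sum r Y \<le> f Y" if Y: "Y \<subseteq> V" "Y \<noteq> {}" for Y
  proof (cases "Y = V")
    case True then show ?thesis using rV Vne by (simp add: f_alpha_def condH_def)
  next
    case False
    then have "V - Y \<subset> V" using Y by blast
    from reg[OF this] have "sum r (V - Y) \<ge> condH H (V - Y) (V - (V - Y))" .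
    moreover have "V - (V - Y) = Y" using Y by blast
    moreover have "sum r V = sum r Y + sum r (V - Y)"
      using sum.subset_diff[OF Y(1) finV, of r] by simp
    ultimately show ?thesis using rV Y by (simp add: f_alpha_def)
  qed
  then show "r \<in> extensional V \<and> sum r V = \<alpha> \<and> (\<forall>Y. Y \<subseteq> V \<longrightarrow> Y \<noteq> {} \<longrightarrow> sum r Y \<le> f Y)"
    using ext rV by blast
next
  assume "r \<in> extensional V \<and> sum r V = \<alpha> \<and> (\<forall>Y. Y \<subseteq> V \<longrightarrow> Y \<noteq> {} \<longrightarrow> sum r Y \<le> f Y)"
  then have ext: "r \<in> extensional V" and rV: "sum r V = \<alpha>"
    and b: "\<And>Y. Y \<subseteq> V \<Longrightarrow> Y \<noteq> {} \<Longrightarrow> sum r Y \<le> f Y" by auto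
  have "sum r X \<ge> condH H X (V - X)" if X: "X \<subset> V" for X
  proof (cases "X = {}")
    case True then show ?thesis by (simp add: condH_def)
  next
    case False
    have Y: "V - X \<subseteq> V" "V - X \<noteq> {}" using X by auto
    from b[OF Y] have "sum r (V - X) \<le> f (V - X)" .
    moreover have "V - (V - X) = X" using X by blast
    moreover have "sum r V = sum r X + sum r (V - X)"
      using sum.subset_diff[OF psubset_imp_subset[OF X] finV, of r] by simp
    ultimately show ?thesis using rV Y by (simp add: f_alpha_def condH_def Un_commute)
  qed
  then show "r \<in> CO_core H V" using ext rV by (simp add: CO_core_def CO_region_def)
qed

lemma f_submod: assumes "A \<subseteq> V" "B \<subseteq> V" "A \<inter> B \<noteq> {}"
  shows "f (A \<union> B) + f (A \<inter> B) \<le> f A + f B"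
proof -
  have ne: "A \<noteq> {}" "B \<noteq> {}" "A \<union> B \<noteq> {}" using assms by auto
  show ?thesis using Hsub[OF assms(1,2)] assms ne
    by (simp add: f_eq le_infI1)
qed

lemma chain:
  assumes "finite S" "S \<subseteq> P" "Y \<subseteq> V" "Y \<noteq> {}" "\<forall>C\<in>S. Y \<inter> C \<noteq> {}"
  shows "f (Y \<union> \<Union>S) + (\<Sum>C\<in>S. f (Y \<inter> C)) \<le> f Y + (\<Sum>C\<in>S. f C)"
  using assms
proof (induction S rule: finite_induct)
  case empty then show ?case by simp
next
  case (insert C S)
  have CP: "C \<in> P" using insert by auto
  have CV: "C \<subseteq> V" using part_sub[OF Ppart CP] .
  have SV: "\<Union>S \<subseteq> V" using insert Ppart by (auto simp: is_partition_def)
  have disj: "\<Union>S \<inter> C = {}"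
  proof -
    have "B \<inter> C = {}" if "B \<in> S" for B
    proof -
      have "B \<noteq> C" "B \<in> P" using that insert by auto
      then show ?thesis using Pdisj CP by blast
    qed
    then show ?thesis by blast
  qed
  let ?A = "Y \<union> \<Union>S"
  have AC: "?A \<inter> C = Y \<inter> C" using disj by blast
  have AV: "?A \<subseteq> V" using insert SV by auto
  have "f (?A \<union> C) + f (?A \<inter> C) \<le> f ?A + f C"
    by (rule f_submod[OF AV CV]) (use AC insert in auto)
  moreover have IH: "f ?A + (\<Sum>B\<in>S. f (Y \<inter> B)) \<le> f Y + (\<Sum>B\<in>S. f B)"
    using insert by auto
  moreover have "Y \<union> \<Union>(insert C S) = ?A \<union> C" by auto
  ultimately show ?case using insert AC by (simp add: sum.insert)
qed

lemma fbound: assumes Y: "Y \<subseteq> V" "Y \<noteq> {}"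
  shows "(\<Sum>C\<in>{C\<in>P. Y \<inter> C \<noteq> {}}. f (Y \<inter> C)) \<le> f Y"
proof -
  define S where "S = {C\<in>P. Y \<inter> C \<noteq> {}}"
  define U where "U = \<Union>S"
  have fS: "finite S" using finP by (simp add: S_def)
  have SP: "S \<subseteq> P" by (auto simp: S_def)
  have "Y \<subseteq> \<Union>S"
  proof
    fix y assume y: "y \<in> Y"
    then have "y \<in> \<Union>P" using Y Ppart by (auto simp: is_partition_def)
    then obtain C where "C \<in> P" "y \<in> C" by blast
    then have "C \<in> S" using y by (auto simp: S_def)
    then show "y \<in> \<Union>S" using \<open>y \<in> C\<close> by blast
  qed
  then have YU: "Y \<union> \<Union>S = U" by (auto simp: U_def)
  have ch: "f U + (\<Sum>C\<in>S. f (Y \<inter> C)) \<le> f Y + (\<Sum>C\<in>S. f C)"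
    using chain[OF fS SP Y] YU by (simp add: S_def)
  have Une: "U \<noteq> {}" using YU Y by auto
  have Udisj: "U \<inter> B = {}" if "B \<in> P - S" for B
  proof -
    have "A \<inter> B = {}" if "A \<in> S" for A
    proof -
      have "A \<in> P" "B \<in> P" "A \<noteq> B" using that \<open>B \<in> P - S\<close> by (auto simp: S_def)
      then show ?thesis by (rule Pdisj)
    qed
    then show ?thesis by (auto simp: U_def)
  qed
  have Unot: "U \<notin> P - S" using Udisj Une by blast
  have Q: "is_partition (insert U (P - S)) V"
    unfolding is_partition_def
  proof (intro conjI ballI impI)
    show "\<Union>(insert U (P - S)) = V" using Ppart by (auto simp: U_def S_def is_partition_def)
    fix A assume "A \<in> insert U (P - S)" then show "A \<noteq> {}" using Une Ppart by (auto simp: is_partition_def)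
  next
    fix A B assume A: "A \<in> insert U (P - S)" and B: "B \<in> insert U (P - S)" and AB: "A \<noteq> B"
    have pd: "X \<inter> Z = {}" if "X \<in> P" "Z \<in> P" "X \<noteq> Z" for X Z
      using Ppart that unfolding is_partition_def by blast
    show "A \<inter> B = {}"
    proof (cases "A = U")
      case True
      then have "B \<in> P - S" using B AB by blast
      then show ?thesis using Udisj True by blast
    next
      case False
      then have A': "A \<in> P - S" using A by blast
      show ?thesis
      proof (cases "B = U")
        case True then show ?thesis using Udisj[OF A'] by blast
      next
        case False
        then have "B \<in> P - S" using B by blast
        then show ?thesis using pd A' AB by blast
      qed
    qed
  qed
  have "D V \<le> (\<Sum>C\<in>insert U (P - S). f C)" by (rule D_le[OF finV Q])
  also have "\<dots> = f U + (\<Sum>C\<in>P - S. f C)" using finP Unot by simp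
  finally have "D V \<le> f U + (\<Sum>C\<in>P - S. f C)" .
  moreover have "D V = (\<Sum>C\<in>S. f C) + (\<Sum>C\<in>P - S. f C)"
    using Psum sum.subset_diff[OF SP finP, of f] by simp
  ultimately have "(\<Sum>C\<in>S. f C) \<le> f U" by simp
  then show ?thesis using ch by (simp add: S_def)
qed


end



lemma sum_restrict_sub: "X \<subseteq> C \<Longrightarrow> sum (restrict r C) X = sum r X"
  by (rule sum.cong) auto

context cfg begin

lemma rD: assumes b: "\<And>Y. Y \<subseteq> V \<Longrightarrow> Y \<noteq> {} \<Longrightarrow> sum r Y \<le> f Y" and X: "X \<subseteq> V"
  shows "sum r X \<le> D X"
proof -
  have fX: "finite X" using X finV by (rule finite_subset)
  obtain Q where Q: "is_partition Q X" and DQ: "D X = (\<Sum>C\<in>Q. f C)" using D_att[OF fX] by blast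
  have "sum r X = (\<Sum>C\<in>Q. sum r C)" by (rule part_sum[OF fX Q, symmetric])
  also have "\<dots> \<le> (\<Sum>C\<in>Q. f C)"
  proof (rule sum_mono)
    fix C assume C: "C \<in> Q"
    show "sum r C \<le> f C" using b[of C] part_sub[OF Q C] X Q C by (auto simp: is_partition_def)
  qed
  finally show ?thesis using DQ by simp
qed

lemma core_fwd: assumes r: "r \<in> CO_core H V"
  shows "(\<forall>C\<in>P. restrict r C \<in> CO_subcore H V C) \<and> r = direct_sum P (\<lambda>C. restrict r C)"
proof -
  have ext: "r \<in> extensional V" and rV: "sum r V = \<alpha>"
    and b: "\<And>Y. Y \<subseteq> V \<Longrightarrow> Y \<noteq> {} \<Longrightarrow> sum r Y \<le> f Y" using r core_char by auto
  have le: "sum r C \<le> f C" if "C \<in> P" for C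
    using rD[OF b part_sub[OF Ppart that]] DC[OF that] by simp
  have "(\<Sum>C\<in>P. f C - sum r C) = 0"
    using PsumA part_sum[OF finV Ppart, of r] rV by (simp add: sum_subtractf)
  then have eq: "sum r C = f C" if "C \<in> P" for C
    using sum_nonneg_eq_0_iff[OF finP, of "\<lambda>C. f C - sum r C"] le that by auto
  have sub: "restrict r C \<in> CO_subcore H V C" if C: "C \<in> P" for C
  proof -
    have CV: "C \<subseteq> V" using part_sub[OF Ppart C] .
    show ?thesis unfolding CO_subcore_def
    proof (intro CollectI conjI allI impI)
      show "restrict r C \<in> extensional C" by simp
      fix X assume XC: "X \<subseteq> C"
      have "sum (restrict r C) X = sum r X" by (rule sum_restrict_sub[OF XC])
      then show "sum (restrict r C) X \<le> D X" using rD[OF b, of X] CV XC by simp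
    next
      have "sum (restrict r C) C = sum r C" by (rule sum_restrict_sub) simp
      then show "sum (restrict r C) C = D C" using eq[OF C] DC[OF C] by simp
    qed
  qed
  have "r = direct_sum P (\<lambda>C. restrict r C)"
  proof
    fix i show "r i = direct_sum P (\<lambda>C. restrict r C) i"
    proof (cases "i \<in> V")
      case True
      then obtain C where "C \<in> P" "i \<in> C" using Ppart by (auto simp: is_partition_def)
      then show ?thesis using direct_sum_in[OF Ppart] by simp
    next
      case False
      then show ?thesis using direct_sum_out[OF Ppart False] ext by (simp add: extensional_def)
    qed
  qed
  then show ?thesis using sub by blast
qed

lemma core_bwd: assumes rC: "\<forall>C\<in>P. rC C \<in> CO_subcore H V C"
  shows "direct_sum P rC \<in> CO_core H V"
proof -
  let ?r = "direct_sum P rC"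
  have ext: "?r \<in> extensional V" using direct_sum_out[OF Ppart] by (auto simp: extensional_def)
  have "sum ?r V = (\<Sum>C\<in>P. sum (rC C) (V \<inter> C))" by (rule direct_sum_sum[OF Ppart finV]) simp
  also have "\<dots> = (\<Sum>C\<in>P. f C)"
  proof (rule sum.cong[OF refl])
    fix C assume C: "C \<in> P"
    then have "V \<inter> C = C" using part_sub[OF Ppart C] by blast
    then show "sum (rC C) (V \<inter> C) = f C" using rC C DC[OF C] by (simp add: CO_subcore_def)
  qed
  finally have rV: "sum ?r V = \<alpha>" using PsumA by simp
  have "sum ?r Y \<le> f Y" if Y: "Y \<subseteq> V" "Y \<noteq> {}" for Y
  proof -
    have "sum ?r Y = (\<Sum>C\<in>P. sum (rC C) (Y \<inter> C))" by (rule direct_sum_sum[OF Ppart finV Y(1)])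
    also have "\<dots> \<le> (\<Sum>C\<in>P. if Y \<inter> C \<noteq> {} then f (Y \<inter> C) else 0)"
    proof (rule sum_mono)
      fix C assume C: "C \<in> P"
      show "sum (rC C) (Y \<inter> C) \<le> (if Y \<inter> C \<noteq> {} then f (Y \<inter> C) else 0)"
      proof (cases "Y \<inter> C = {}")
        case False
        have fin: "finite (Y \<inter> C)" using Y finV by (auto intro: finite_subset)
        have "is_partition {Y \<inter> C} (Y \<inter> C)" using False by (simp add: is_partition_def)
        from D_le[OF fin this, of H V \<alpha>] have "D (Y \<inter> C) \<le> f (Y \<inter> C)" by simp
        moreover have "sum (rC C) (Y \<inter> C) \<le> D (Y \<inter> C)" using rC C by (auto simp: CO_subcore_def)
        ultimately show ?thesis using False by simp
      qed simp
    qed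
    also have "\<dots> = (\<Sum>C\<in>{C\<in>P. Y \<inter> C \<noteq> {}}. f (Y \<inter> C))"
      by (rule sum.inter_filter[OF finP, symmetric])
    also have "\<dots> \<le> f Y" by (rule fbound[OF Y])
    finally show ?thesis .
  qed
  then show ?thesis using core_char ext rV by blast
qed

lemma core_iff: "r \<in> CO_core H V \<longleftrightarrow> (\<exists>rC. (\<forall>C\<in>P. rC C \<in> CO_subcore H V C) \<and> r = direct_sum P rC)"
  using core_fwd core_bwd by blast

lemma coreQ_iff: "r \<in> CO_core H V \<inter> QK_vectors K V \<longleftrightarrow>
   (\<exists>rC. (\<forall>C\<in>P. rC C \<in> CO_subcore H V C \<inter> QK_vectors K C) \<and> r = direct_sum P rC)"
proof
  assume r: "r \<in> CO_core H V \<inter> QK_vectors K V"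
  have "\<forall>C\<in>P. restrict r C \<in> QK_vectors K C"
    using r part_sub[OF Ppart] by (auto simp: QK_vectors_def)
  then show "\<exists>rC. (\<forall>C\<in>P. rC C \<in> CO_subcore H V C \<inter> QK_vectors K C) \<and> r = direct_sum P rC"
    using core_fwd[of r] r by (intro exI[of _ "\<lambda>C. restrict r C"]) auto
next
  assume "\<exists>rC. (\<forall>C\<in>P. rC C \<in> CO_subcore H V C \<inter> QK_vectors K C) \<and> r = direct_sum P rC"
  then obtain rC where rC: "\<forall>C\<in>P. rC C \<in> CO_subcore H V C \<inter> QK_vectors K C" and r: "r = direct_sum P rC" by blast
  have "r \<in> CO_core H V" using core_bwd rC r by auto
  moreover have "r \<in> QK_vectors K V"
    unfolding QK_vectors_def
  proof (intro CollectI ballI)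
    fix i assume "i \<in> V"
    then obtain C where C: "C \<in> P" "i \<in> C" using Ppart by (auto simp: is_partition_def)
    then have "r i = rC C i" using r direct_sum_in[OF Ppart] by simp
    then show "\<exists>z::int. r i = real_of_int z / real K" using rC C by (auto simp: QK_vectors_def)
  qed
  ultimately show "r \<in> CO_core H V \<inter> QK_vectors K V" by blast
qed

end

lemma ws_sum: assumes P: "is_partition P V" and fin: "finite V"
  shows "weighted_sq w V (direct_sum P rC) = (\<Sum>C\<in>P. weighted_sq w C (rC C))"
proof -
  have "weighted_sq w V (direct_sum P rC) = (\<Sum>C\<in>P. \<Sum>i\<in>C. (direct_sum P rC i)^2 / w i)"
    unfolding weighted_sq_def using part_sum[OF fin P, of "\<lambda>i. (direct_sum P rC i)^2 / w i"] by simp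
  also have "\<dots> = (\<Sum>C\<in>P. weighted_sq w C (rC C))"
    unfolding weighted_sq_def by (intro sum.cong refl) (simp add: direct_sum_in[OF P])
  finally show ?thesis .
qed

lemma minim:
  assumes P: "is_partition P V" and fin: "finite V"
    and hT: "\<And>r. r \<in> T \<longleftrightarrow> (\<exists>rC. (\<forall>C\<in>P. rC C \<in> S C) \<and> r = direct_sum P rC)"
  shows "is_minimizer (weighted_sq w V) T r \<longleftrightarrow>
     (\<exists>rC. (\<forall>C\<in>P. is_minimizer (weighted_sq w C) (S C) (rC C)) \<and> r = direct_sum P rC)"
proof
  have fP: "finite P" using part_fin[OF fin P] .
  assume m: "is_minimizer (weighted_sq w V) T r"
  then have "r \<in> T" by (simp add: is_minimizer_def)
  then obtain rC where rC: "\<forall>C\<in>P. rC C \<in> S C" and r: "r = direct_sum P rC" using hT by blast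
  have "is_minimizer (weighted_sq w C0) (S C0) (rC C0)" if C0: "C0 \<in> P" for C0
    unfolding is_minimizer_def
  proof (intro conjI ballI)
    show "rC C0 \<in> S C0" using rC C0 by blast
    fix s assume s: "s \<in> S C0"
    define rC' where "rC' = rC(C0 := s)"
    have "\<forall>C\<in>P. rC' C \<in> S C" using rC s by (auto simp: rC'_def)
    then have "direct_sum P rC' \<in> T" unfolding hT by blast
    then have "weighted_sq w V r \<le> weighted_sq w V (direct_sum P rC')" using m by (simp add: is_minimizer_def)
    also have "weighted_sq w V (direct_sum P rC') = weighted_sq w C0 s + (\<Sum>C\<in>P - {C0}. weighted_sq w C (rC C))"
      using ws_sum[OF P fin] sum.remove[OF fP C0, of "\<lambda>C. weighted_sq w C (rC' C)"]
      by (simp add: rC'_def)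
    also have "weighted_sq w V r = weighted_sq w C0 (rC C0) + (\<Sum>C\<in>P - {C0}. weighted_sq w C (rC C))"
      using ws_sum[OF P fin] sum.remove[OF fP C0, of "\<lambda>C. weighted_sq w C (rC C)"] r by simp
    finally show "weighted_sq w C0 (rC C0) \<le> weighted_sq w C0 s" by simp
  qed
  then show "\<exists>rC. (\<forall>C\<in>P. is_minimizer (weighted_sq w C) (S C) (rC C)) \<and> r = direct_sum P rC"
    using r by blast
next
  assume "\<exists>rC. (\<forall>C\<in>P. is_minimizer (weighted_sq w C) (S C) (rC C)) \<and> r = direct_sum P rC"
  then obtain rC where m: "\<forall>C\<in>P. is_minimizer (weighted_sq w C) (S C) (rC C)" and r: "r = direct_sum P rC"
    by blast
  have rT: "r \<in> T" using hT m r by (auto simp: is_minimizer_def)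
  show "is_minimizer (weighted_sq w V) T r"
    unfolding is_minimizer_def
  proof (intro conjI ballI rT)
    fix t assume "t \<in> T"
    then obtain tC where tC: "\<forall>C\<in>P. tC C \<in> S C" and t: "t = direct_sum P tC" using hT by blast
    have "(\<Sum>C\<in>P. weighted_sq w C (rC C)) \<le> (\<Sum>C\<in>P. weighted_sq w C (tC C))"
      by (rule sum_mono) (use m tC in \<open>auto simp: is_minimizer_def\<close>)
    then show "weighted_sq w V r \<le> weighted_sq w V t" using ws_sum[OF P fin] r t by simp
  qed
qed


theorem theorem3:
  fixes V :: "'i set" and p :: "('i \<Rightarrow> 'a::finite) \<Rightarrow> real"
    and w :: "'i \<Rightarrow> real" and P :: "'i set set" and K :: nat
  defines "H \<equiv> entropy_fun V p"
  assumes "finite V" and "card V > 1"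
    and "is_joint_pmf V p"
    and "\<forall>i\<in>V. w i > 0"
    and "fundamental_partition H V P" and "card P \<ge> 2"
    and "K = card P - 1"
  shows
    "(\<forall>r. is_minimizer (weighted_sq w V) (CO_core H V) r \<longleftrightarrow>
        (\<exists>rC. (\<forall>C\<in>P. is_minimizer (weighted_sq w C) (CO_subcore H V C) (rC C))
              \<and> r = direct_sum P rC))
   \<and> (\<forall>r. is_minimizer (weighted_sq w V) (CO_core H V \<inter> QK_vectors K V) r \<longleftrightarrow>
        (\<exists>rC. (\<forall>C\<in>P. is_minimizer (weighted_sq w C) (CO_subcore H V C \<inter> QK_vectors K C) (rC C))
              \<and> r = direct_sum P rC))"
  proof -
  interpret S: src V p using \<open>finite V\<close> \<open>is_joint_pmf V p\<close> by unfold_locales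
  interpret C: cfg H V P
  proof unfold_locales
    show "finite V" by fact
    show "card V > 1" by fact
    show "fundamental_partition H V P" by fact
    fix A B assume "A \<subseteq> V" "B \<subseteq> V"
    then show "H (A \<union> B) + H (A \<inter> B) \<le> H A + H B" unfolding H_def by (rule S.submod)
  next
    fix A assume "A \<subseteq> V"
    then show "H A \<ge> 0" unfolding H_def by (rule S.ent_nonneg)
  qed
  show ?thesis
  proof (intro conjI allI)
    fix r
    show "is_minimizer (weighted_sq w V) (CO_core H V) r \<longleftrightarrow>
        (\<exists>rC. (\<forall>C\<in>P. is_minimizer (weighted_sq w C) (CO_subcore H V C) (rC C)) \<and> r = direct_sum P rC)"
      by (rule minim[OF C.Ppart C.finV C.core_iff])
    show "is_minimizer (weighted_sq w V) (CO_core H V \<inter> QK_vectors K V) r \<longleftrightarrow>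
        (\<exists>rC. (\<forall>C\<in>P. is_minimizer (weighted_sq w C) (CO_subcore H V C \<inter> QK_vectors K C) (rC C)) \<and> r = direct_sum P rC)"
      by (rule minim[OF C.Ppart C.finV C.coreQ_iff])
  qed
qed

end
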